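(* Let $S$ be a specialisation independent scheduling rule, $G$ a p-goal and $\phi$ a substitution. If there is a p-SLD derivation $G\xrightarrow{S,X,\theta}\cdot$ via $S$ with template $X$ and composed mgu $\theta$ (the composition of the mgus of its steps), then there is a p-SLD derivation $G\theta\phi\xrightarrow{S,X}\cdot$ via $S$ with the same template $X$.
   Context: A p-atom is a pair $a[p]$ of an atom $a$ and a rational priority $p$. A p-goal is a finite set of p-atoms with pairwise distinct priorities, regarded as a list ordered by increasing priority. Substitutions act on atoms and leave priorities unchanged. A clause is $h\leftarrow B$ with $h$ an atom and $B$ a p-goal. For p-goals with no common priority, $F+G=F\cup G$; $F|G$ denotes $F+G$ when all priorities of $F$ are smaller than those of $G$. A shifting $\underline{\pi}$ is a strictly increasing bijection $\mathbb{Q}\to\mathbb{Q}$ acting on priorities. Priority derivation step: for a p-goal $a|F$ ($a$ of least priority), clause $c=(h\leftarrow B)$, renaming $\xi$ with $var(a|F)\cap var(c\xi)=\emptyset$, idempotent relevant mgu $\theta$ of $a$ and $h\xi$, shifting $\underline{\pi}$ with $F$, $B\xi\underline{\pi}$ sharing no priority: $a|F\xrightarrow{c\xi,\theta}(F+B\xi\underline{\pi})\theta$. A p-SLD derivation $G_0\xrightarrow{c_0\xi_0,\theta_0}G_1\cdots\xrightarrow{c_{k}\xi_{k},\theta_{k}}G_{k+1}$ is a sequence of such steps with each renamed clause variable-disjoint from $G_0$ and all earlier renamed clauses; its template is $c_0,\dots,c_k$ and it is written $G_0\xrightarrow{M,\theta}G_{k+1}$ with $\theta=\theta_0\cdots\theta_k$;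 it is via $S$ if all steps lie in $S$. Lowering: for $c=(h\leftarrow B)$, a step $a\lambda\underline{\sigma}|(K\lambda\underline{\sigma}+X)\xrightarrow{c}(X+K\lambda\underline{\sigma}+B\xi''\underline{\theta}'')\alpha''$ is a lowering by $X$ of $a|K\xrightarrow{c}(K+B\xi'\underline{\theta}')\alpha'$ ($\lambda$ a substitution, $\underline\sigma$ a shifting); a congruent lowering if some shifting $\underline{\rho}$ has $K\underline{\rho}=K\underline{\sigma}$ and $B\underline{\theta}'\underline{\rho}=B\underline{\theta}''$. Steps are congruent lowerings of each other if each is a congruent lowering of the other. A set $S$ of steps is complete if (i) whenever some step $G\xrightarrow{c}\cdot$ exists, some step $G\xrightarrow{c}\cdot$ lies in $S$, and (ii) $S$ contains every step that is a congruent lowering of each other with a step of $S$; it is specialisation independent if whenever $Ds_1,Ds_2\in S$ and $Ds_2$ is a lowering of $Ds_1$ by $X$, $Ds_2$ is a congruent lowering of $Ds_1$ by $X$. A specialisation independent scheduling rule is a complete specialisation independent set of steps. *)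

theory Defs
  imports Main "HOL.Rat"
begin

datatype ('f, 'v) fterm = Var 'v | Fun 'f "('f, 'v) fterm list"

datatype ('p, 'f, 'v) atom = Atom 'p "('f, 'v) fterm list"

type_synonym ('f, 'v) subst = "'v \<Rightarrow> ('f, 'v) fterm"

fun subst_term :: "('f, 'v) subst \<Rightarrow> ('f, 'v) fterm \<Rightarrow> ('f, 'v) fterm" where
  "subst_term \<sigma> (Var x) = \<sigma> x"
| "subst_term \<sigma> (Fun f ts) = Fun f (map (subst_term \<sigma>) ts)"

fun vars_term :: "('f, 'v) fterm \<Rightarrow> 'v set" where
  "vars_term (Var x) = {x}"
| "vars_term (Fun f ts) = \<Union> (set (map vars_term ts))"

fun subst_atom :: "('f, 'v) subst \<Rightarrow> ('p, 'f, 'v) atom \<Rightarrow> ('p, 'f, 'v) atom" where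
  "subst_atom \<sigma> (Atom P ts) = Atom P (map (subst_term \<sigma>) ts)"

fun vars_atom :: "('p, 'f, 'v) atom \<Rightarrow> 'v set" where
  "vars_atom (Atom P ts) = \<Union> (set (map vars_term ts))"

definition subst_comp :: "('f, 'v) subst \<Rightarrow> ('f, 'v) subst \<Rightarrow> ('f, 'v) subst" (infixl "\<circ>\<^sub>s" 75) where
  "\<sigma> \<circ>\<^sub>s \<tau> = (\<lambda>x. subst_term \<tau> (\<sigma> x))"

definition subst_domain :: "('f, 'v) subst \<Rightarrow> 'v set" where
  "subst_domain \<sigma> = {x. \<sigma> x \<noteq> Var x}"

definition subst_range_vars :: "('f, 'v) subst \<Rightarrow> 'v set" where
  "subst_range_vars \<sigma> = (\<Union>x \<in> subst_domain \<sigma>. vars_term (\<sigma> x))"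

definition subst_vars :: "('f, 'v) subst \<Rightarrow> 'v set" where
  "subst_vars \<sigma> = subst_domain \<sigma> \<union> subst_range_vars \<sigma>"

definition renaming :: "('f, 'v) subst \<Rightarrow> bool" where
  "renaming \<xi> \<longleftrightarrow> (\<exists>f. bij f \<and> \<xi> = (\<lambda>x. Var (f x)))"

definition unifier :: "('f, 'v) subst \<Rightarrow> ('p, 'f, 'v) atom \<Rightarrow> ('p, 'f, 'v) atom \<Rightarrow> bool" where
  "unifier \<sigma> a b \<longleftrightarrow> subst_atom \<sigma> a = subst_atom \<sigma> b"

definition mgu :: "('f, 'v) subst \<Rightarrow> ('p, 'f, 'v) atom \<Rightarrow> ('p, 'f, 'v) atom \<Rightarrow> bool" where
  "mgu \<theta> a b \<longleftrightarrow> unifier \<theta> a b \<and> (\<forall>\<sigma>. unifier \<sigma> a b \<longrightarrow> (\<exists>\<delta>. \<sigma> = \<theta> \<circ>\<^sub>s \<delta>))"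

definition idem_rel_mgu :: "('f, 'v) subst \<Rightarrow> ('p, 'f, 'v) atom \<Rightarrow> ('p, 'f, 'v) atom \<Rightarrow> bool" where
  "idem_rel_mgu \<theta> a b \<longleftrightarrow> mgu \<theta> a b \<and> \<theta> \<circ>\<^sub>s \<theta> = \<theta>
     \<and> subst_vars \<theta> \<subseteq> vars_atom a \<union> vars_atom b"

type_synonym ('p, 'f, 'v) patom = "('p, 'f, 'v) atom \<times> rat"
type_synonym ('p, 'f, 'v) pgoal = "('p, 'f, 'v) patom set"
type_synonym ('p, 'f, 'v) clause = "('p, 'f, 'v) atom \<times> ('p, 'f, 'v) pgoal"

definition prios :: "('p, 'f, 'v) pgoal \<Rightarrow> rat set" where
  "prios G = snd ` G"

definition is_pgoal :: "('p, 'f, 'v) pgoal \<Rightarrow> bool" where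
  "is_pgoal G \<longleftrightarrow> finite G \<and> (\<forall>x\<in>G. \<forall>y\<in>G. snd x = snd y \<longrightarrow> x = y)"

definition subst_pgoal :: "('f, 'v) subst \<Rightarrow> ('p, 'f, 'v) pgoal \<Rightarrow> ('p, 'f, 'v) pgoal" where
  "subst_pgoal \<sigma> G = (\<lambda>(a, p). (subst_atom \<sigma> a, p)) ` G"

definition vars_pgoal :: "('p, 'f, 'v) pgoal \<Rightarrow> 'v set" where
  "vars_pgoal G = (\<Union>x\<in>G. vars_atom (fst x))"

definition shifting :: "(rat \<Rightarrow> rat) \<Rightarrow> bool" where
  "shifting \<pi> \<longleftrightarrow> strict_mono \<pi> \<and> bij \<pi>"

definition shift_pgoal :: "(rat \<Rightarrow> rat) \<Rightarrow> ('p, 'f, 'v) pgoal \<Rightarrow> ('p, 'f, 'v) pgoal" where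
  "shift_pgoal \<pi> G = (\<lambda>(a, p). (a, \<pi> p)) ` G"

definition subst_patom :: "('f, 'v) subst \<Rightarrow> ('p, 'f, 'v) patom \<Rightarrow> ('p, 'f, 'v) patom" where
  "subst_patom \<sigma> x = (subst_atom \<sigma> (fst x), snd x)"

definition shift_patom :: "(rat \<Rightarrow> rat) \<Rightarrow> ('p, 'f, 'v) patom \<Rightarrow> ('p, 'f, 'v) patom" where
  "shift_patom \<pi> x = (fst x, \<pi> (snd x))"

definition is_clause :: "('p, 'f, 'v) clause \<Rightarrow> bool" where
  "is_clause c \<longleftrightarrow> is_pgoal (snd c)"

definition subst_clause :: "('f, 'v) subst \<Rightarrow> ('p, 'f, 'v) clause \<Rightarrow> ('p, 'f, 'v) clause" where
  "subst_clause \<sigma> c = (subst_atom \<sigma> (fst c), subst_pgoal \<sigma> (snd c))"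

definition vars_clause :: "('p, 'f, 'v) clause \<Rightarrow> 'v set" where
  "vars_clause c = vars_atom (fst c) \<union> vars_pgoal (snd c)"

text \<open>A step  a|F --c xi, theta-->  (F + B xi pi) theta  is recorded by its data:
  the selected p-atom a (of least priority), the rest F of the goal, the clause c,
  the renaming xi, the mgu theta and the shifting pi.\<close>
record ('p, 'f, 'v) pstep =
  st_sel    :: "('p, 'f, 'v) patom"
  st_rest   :: "('p, 'f, 'v) pgoal"
  st_clause :: "('p, 'f, 'v) clause"
  st_ren    :: "('f, 'v) subst"
  st_mgu    :: "('f, 'v) subst"
  st_shift  :: "rat \<Rightarrow> rat"

definition st_source :: "('p, 'f, 'v) pstep \<Rightarrow> ('p, 'f, 'v) pgoal" where
  "st_source s = insert (st_sel s) (st_rest s)"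

definition st_target :: "('p, 'f, 'v) pstep \<Rightarrow> ('p, 'f, 'v) pgoal" where
  "st_target s = subst_pgoal (st_mgu s)
      (st_rest s \<union> shift_pgoal (st_shift s) (subst_pgoal (st_ren s) (snd (st_clause s))))"

definition valid_step :: "('p, 'f, 'v) pstep \<Rightarrow> bool" where
  "valid_step s \<longleftrightarrow>
     is_pgoal (st_source s) \<and> (\<forall>y\<in>st_rest s. snd (st_sel s) < snd y)
     \<and> is_clause (st_clause s)
     \<and> renaming (st_ren s)
     \<and> vars_pgoal (st_source s) \<inter> vars_clause (subst_clause (st_ren s) (st_clause s)) = {}
     \<and> idem_rel_mgu (st_mgu s) (fst (st_sel s)) (subst_atom (st_ren s) (fst (st_clause s)))
     \<and> shifting (st_shift s)
     \<and> prios (st_rest s) \<inter> prios (shift_pgoal (st_shift s) (subst_pgoal (st_ren s) (snd (st_clause s)))) = {}"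

definition pderivation :: "('p, 'f, 'v) pgoal \<Rightarrow> ('p, 'f, 'v) pstep list \<Rightarrow> bool" where
  "pderivation G0 ds \<longleftrightarrow>
     (\<forall>i<length ds. valid_step (ds ! i))
     \<and> (ds \<noteq> [] \<longrightarrow> st_source (ds ! 0) = G0)
     \<and> (\<forall>i. Suc i < length ds \<longrightarrow> st_source (ds ! Suc i) = st_target (ds ! i))
     \<and> (\<forall>i<length ds. vars_clause (subst_clause (st_ren (ds ! i)) (st_clause (ds ! i)))
                        \<inter> vars_pgoal G0 = {})
     \<and> (\<forall>i<length ds. \<forall>j<i. vars_clause (subst_clause (st_ren (ds ! i)) (st_clause (ds ! i)))
                        \<inter> vars_clause (subst_clause (st_ren (ds ! j)) (st_clause (ds ! j))) = {})"

definition template :: "('p, 'f, 'v) pstep list \<Rightarrow> ('p, 'f, 'v) clause list" where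
  "template ds = map st_clause ds"

text \<open>Composed mgu theta_0 theta_1 ... theta_k (theta_0 applied first).\<close>
definition composed_mgu :: "('p, 'f, 'v) pstep list \<Rightarrow> ('f, 'v) subst" where
  "composed_mgu ds = foldr (\<lambda>s acc. st_mgu s \<circ>\<^sub>s acc) ds Var"

definition via :: "('p, 'f, 'v) pstep set \<Rightarrow> ('p, 'f, 'v) pstep list \<Rightarrow> bool" where
  "via S ds \<longleftrightarrow> set ds \<subseteq> S"

text \<open>ds2 is a lowering by X of ds1, witnessed by substitution lam and shifting sig:
  ds1 = a|K --c--> ..., ds2 = a lam sig | (K lam sig + X) --c--> ...\<close>
definition lowering_with ::
  "('f, 'v) subst \<Rightarrow> (rat \<Rightarrow> rat) \<Rightarrow> ('p, 'f, 'v) pgoal \<Rightarrow> ('p, 'f, 'v) pstep \<Rightarrow> ('p, 'f, 'v) pstep \<Rightarrow> bool" where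
  "lowering_with lam sig X ds2 ds1 \<longleftrightarrow>
     valid_step ds1 \<and> valid_step ds2 \<and> shifting sig \<and> is_pgoal X
     \<and> st_clause ds2 = st_clause ds1
     \<and> st_sel ds2 = shift_patom sig (subst_patom lam (st_sel ds1))
     \<and> prios (shift_pgoal sig (subst_pgoal lam (st_rest ds1))) \<inter> prios X = {}
     \<and> st_rest ds2 = shift_pgoal sig (subst_pgoal lam (st_rest ds1)) \<union> X"

definition lowering :: "('p, 'f, 'v) pgoal \<Rightarrow> ('p, 'f, 'v) pstep \<Rightarrow> ('p, 'f, 'v) pstep \<Rightarrow> bool" where
  "lowering X ds2 ds1 \<longleftrightarrow> (\<exists>lam sig. lowering_with lam sig X ds2 ds1)"

definition congruent_lowering :: "('p, 'f, 'v) pgoal \<Rightarrow> ('p, 'f, 'v) pstep \<Rightarrow> ('p, 'f, 'v) pstep \<Rightarrow> bool" where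
  "congruent_lowering X ds2 ds1 \<longleftrightarrow>
     (\<exists>lam sig. lowering_with lam sig X ds2 ds1
        \<and> (\<exists>\<rho>. shifting \<rho>
              \<and> shift_pgoal \<rho> (st_rest ds1) = shift_pgoal sig (st_rest ds1)
              \<and> shift_pgoal \<rho> (shift_pgoal (st_shift ds1) (snd (st_clause ds1)))
                  = shift_pgoal (st_shift ds2) (snd (st_clause ds1))))"

definition mutual_congruent_lowerings :: "('p, 'f, 'v) pstep \<Rightarrow> ('p, 'f, 'v) pstep \<Rightarrow> bool" where
  "mutual_congruent_lowerings ds1 ds2 \<longleftrightarrow>
     (\<exists>X. congruent_lowering X ds1 ds2) \<and> (\<exists>X. congruent_lowering X ds2 ds1)"

definition complete_steps :: "('p, 'f, 'v) pstep set \<Rightarrow> bool" where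
  "complete_steps S \<longleftrightarrow>
     S \<subseteq> {s. valid_step s}
     \<and> (\<forall>s. valid_step s \<longrightarrow>
          (\<exists>s'\<in>S. st_source s' = st_source s \<and> st_clause s' = st_clause s))
     \<and> (\<forall>s\<in>S. \<forall>s'. mutual_congruent_lowerings s' s \<longrightarrow> s' \<in> S)"

definition spec_independent :: "('p, 'f, 'v) pstep set \<Rightarrow> bool" where
  "spec_independent S \<longleftrightarrow>
     (\<forall>ds1\<in>S. \<forall>ds2\<in>S. \<forall>X. lowering X ds2 ds1 \<longrightarrow> congruent_lowering X ds2 ds1)"

definition spec_indep_scheduling_rule :: "('p, 'f, 'v) pstep set \<Rightarrow> bool" where
  "spec_indep_scheduling_rule S \<longleftrightarrow> complete_steps S \<and> spec_independent S"

end

theory Submission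
  imports Defs
begin


lemma subst_term_comp: "subst_term (\<sigma> \<circ>\<^sub>s \<tau>) t = subst_term \<tau> (subst_term \<sigma> t)"
  by (induction t) (auto simp: subst_comp_def)

lemma subst_atom_comp: "subst_atom (\<sigma> \<circ>\<^sub>s \<tau>) a = subst_atom \<tau> (subst_atom \<sigma> a)"
  by (cases a) (simp add: subst_term_comp)

lemma subst_comp_assoc: "(\<sigma> \<circ>\<^sub>s \<tau>) \<circ>\<^sub>s \<upsilon> = \<sigma> \<circ>\<^sub>s (\<tau> \<circ>\<^sub>s \<upsilon>)"
  by (rule ext) (metis subst_comp_def subst_term_comp)

lemma subst_term_Var[simp]: "subst_term Var t = t"
  by (induction t) (auto simp: map_idI)

lemma subst_term_Var_fun[simp]: "subst_term Var = (\<lambda>t. t)"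
  by (rule ext) simp

lemma subst_atom_Var[simp]: "subst_atom Var a = a"
  by (cases a) auto

lemma subst_comp_Var_left[simp]: "Var \<circ>\<^sub>s \<sigma> = \<sigma>"
  by (rule ext) (simp add: subst_comp_def)

lemma subst_comp_Var_right[simp]: "\<sigma> \<circ>\<^sub>s Var = \<sigma>"
  by (rule ext) (simp add: subst_comp_def)

lemma subst_term_cong: "(\<And>x. x \<in> vars_term t \<Longrightarrow> \<sigma> x = \<tau> x) \<Longrightarrow> subst_term \<sigma> t = subst_term \<tau> t"
  by (induction t) auto

lemma subst_atom_cong: "(\<And>x. x \<in> vars_atom a \<Longrightarrow> \<sigma> x = \<tau> x) \<Longrightarrow> subst_atom \<sigma> a = subst_atom \<tau> a"
  by (cases a) (auto intro: subst_term_cong)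

lemma vars_term_subst: "vars_term (subst_term \<sigma> t) = (\<Union>x\<in>vars_term t. vars_term (\<sigma> x))"
  by (induction t) auto

lemma vars_atom_subst: "vars_atom (subst_atom \<sigma> a) = (\<Union>x\<in>vars_atom a. vars_term (\<sigma> x))"
  by (cases a) (auto simp: vars_term_subst)

lemma finite_vars_term[simp]: "finite (vars_term t)"
  by (induction t) auto

lemma finite_vars_atom[simp]: "finite (vars_atom a)"
  by (cases a) auto



definition unifE :: "('f, 'v) subst \<Rightarrow> (('f, 'v) fterm \<times> ('f, 'v) fterm) list \<Rightarrow> bool" where
  "unifE \<sigma> E \<longleftrightarrow> (\<forall>(s, t)\<in>set E. subst_term \<sigma> s = subst_term \<sigma> t)"

definition varsE :: "(('f, 'v) fterm \<times> ('f, 'v) fterm) list \<Rightarrow> 'v set" where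
  "varsE E = (\<Union>(s, t)\<in>set E. vars_term s \<union> vars_term t)"

fun tsize :: "('f, 'v) fterm \<Rightarrow> nat" where
  "tsize (Var x) = 1"
| "tsize (Fun f ts) = Suc (sum_list (map tsize ts))"

definition szE :: "(('f, 'v) fterm \<times> ('f, 'v) fterm) list \<Rightarrow> nat" where
  "szE E = sum_list (map (\<lambda>(s, t). tsize s + tsize t) E)"

definition mguE :: "('f, 'v) subst \<Rightarrow> (('f, 'v) fterm \<times> ('f, 'v) fterm) list \<Rightarrow> bool" where
  "mguE \<theta> E \<longleftrightarrow> unifE \<theta> E \<and> (\<forall>\<sigma>. unifE \<sigma> E \<longrightarrow> \<sigma> = \<theta> \<circ>\<^sub>s \<sigma>) \<and> subst_vars \<theta> \<subseteq> varsE E"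

lemma tsize_pos: "tsize t > 0"
  by (cases t) auto

lemma finite_varsE[simp]: "finite (varsE E)"
  by (auto simp: varsE_def)

lemma subst_vars_subI:
  "(\<And>y. \<sigma> y \<noteq> Var y \<Longrightarrow> y \<in> V \<and> vars_term (\<sigma> y) \<subseteq> V) \<Longrightarrow> subst_vars \<sigma> \<subseteq> V"
  by (auto simp: subst_vars_def subst_domain_def subst_range_vars_def)

lemma subst_vars_subD:
  "subst_vars \<sigma> \<subseteq> V \<Longrightarrow> \<sigma> y \<noteq> Var y \<Longrightarrow> y \<in> V \<and> vars_term (\<sigma> y) \<subseteq> V"
  by (auto simp: subst_vars_def subst_domain_def subst_range_vars_def)

lemma occurs_le: "x \<in> vars_term t \<Longrightarrow> tsize (\<sigma> x) \<le> tsize (subst_term \<sigma> t)"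
proof (induction t)
  case (Var y)
  then show ?case by simp
next
  case (Fun f ts)
  then obtain ti where ti: "ti \<in> set ts" "x \<in> vars_term ti" by auto
  then have "tsize (\<sigma> x) \<le> tsize (subst_term \<sigma> ti)" using Fun by auto
  also have "\<dots> \<le> sum_list (map tsize (map (subst_term \<sigma>) ts))"
    using ti by (intro member_le_sum_list) auto
  finally show ?case by simp
qed

lemma occurs_lt: assumes "x \<in> vars_term t" "t \<noteq> Var x" shows "tsize (\<sigma> x) < tsize (subst_term \<sigma> t)"
proof (cases t)
  case (Var y)
  then show ?thesis using assms by auto
next
  case (Fun f ts)
  then obtain ti where ti: "ti \<in> set ts" "x \<in> vars_term ti" using assms by auto
  have "tsize (\<sigma> x) \<le> tsize (subst_term \<sigma> ti)" by (rule occurs_le[OF ti(2)])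
  also have "\<dots> \<le> sum_list (map tsize (map (subst_term \<sigma>) ts))"
    using ti by (intro member_le_sum_list) auto
  finally show ?thesis using Fun by simp
qed

lemma map_eq_zip: "map h ss = map h ts \<longleftrightarrow> length ss = length ts \<and> (\<forall>(a, b)\<in>set (zip ss ts). h a = h b)"
proof (induction ss arbitrary: ts)
  case Nil
  then show ?case by auto
next
  case (Cons s ss)
  then show ?case by (cases ts) auto
qed

lemma varsE_zip: "length ss = length ts \<Longrightarrow>
  varsE (zip ss ts) = (\<Union>s\<in>set ss. vars_term s) \<union> (\<Union>t\<in>set ts. vars_term t)"
proof (induction ss arbitrary: ts)
  case Nil
  then show ?case by (auto simp: varsE_def)
next
  case (Cons s ss)
  then show ?case by (cases ts) (auto simp: varsE_def)
qed

lemma szE_zip: "length ss = length ts \<Longrightarrow>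
  szE (zip ss ts) = sum_list (map tsize ss) + sum_list (map tsize ts)"
proof (induction ss arbitrary: ts)
  case Nil
  then show ?case by (auto simp: szE_def)
next
  case (Cons s ss)
  then show ?case by (cases ts) (auto simp: szE_def)
qed

lemma mguE_transfer:
  assumes "\<And>\<sigma>. unifE \<sigma> E1 \<longleftrightarrow> unifE \<sigma> E2" "varsE E1 \<subseteq> varsE E2" "mguE \<theta> E1"
  shows "mguE \<theta> E2"
  using assms unfolding mguE_def by blast

lemma var_elim:
  fixes E :: "(('f, 'v) fterm \<times> ('f, 'v) fterm) list" and t :: "('f, 'v) fterm"
  assumes x: "x \<notin> vars_term t" and u: "unifE u ((Var x, t) # E)"
    and IH: "\<And>(E' :: (('f, 'v) fterm \<times> ('f, 'v) fterm) list) u'. card (varsE E') < card (varsE ((Var x, t) # E)) \<Longrightarrow> unifE u' E' \<Longrightarrow> \<exists>\<theta>. mguE \<theta> E'"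
  shows "\<exists>\<theta>. mguE \<theta> ((Var x, t) # E)"
proof -
  define \<sigma> where "\<sigma> = Var(x := t)"
  define E' where "E' = map (\<lambda>(a, b). (subst_term \<sigma> a, subst_term \<sigma> b)) E"
  have \<sigma>t: "subst_term \<sigma> t = t"
    using x by (subst subst_term_cong[of t \<sigma> Var]) (auto simp: \<sigma>_def)
  have \<sigma>v: "\<sigma> \<circ>\<^sub>s v = v" if "unifE v ((Var x, t) # E)" for v
    using that by (auto simp: \<sigma>_def subst_comp_def unifE_def fun_eq_iff)
  have unifE': "unifE v E'" if "unifE v ((Var x, t) # E)" for v
  proof -
    have "subst_term v (subst_term \<sigma> a) = subst_term v a" for a
      using \<sigma>v[OF that] by (metis subst_term_comp)
    then show ?thesis using that by (auto simp: unifE_def E'_def)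
  qed
  have vsub: "vars_term (subst_term \<sigma> a) \<subseteq> (vars_term a - {x}) \<union> vars_term t" for a
    by (auto simp: vars_term_subst \<sigma>_def split: if_splits)
  have vars': "varsE E' \<subseteq> varsE ((Var x, t) # E) - {x}"
  proof
    fix y assume "y \<in> varsE E'"
    then obtain a b where ab: "(a, b) \<in> set E" "y \<in> vars_term (subst_term \<sigma> a) \<or> y \<in> vars_term (subst_term \<sigma> b)"
      by (auto simp: varsE_def E'_def)
    then show "y \<in> varsE ((Var x, t) # E) - {x}"
      using vsub[of a] vsub[of b] x by (auto simp: varsE_def)
  qed
  have card: "card (varsE E') < card (varsE ((Var x, t) # E))"
    by (rule psubset_card_mono) (use vars' in \<open>auto simp: varsE_def\<close>)
  obtain \<theta>' where \<theta>': "mguE \<theta>' E'" using IH card unifE'[OF u] by blast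
  define \<theta> where "\<theta> = \<sigma> \<circ>\<^sub>s \<theta>'"
  have th_eq: "subst_term \<theta> a = subst_term \<theta>' (subst_term \<sigma> a)" for a
    by (simp add: \<theta>_def subst_term_comp)
  have unif: "unifE \<theta> ((Var x, t) # E)"
  proof -
    have "subst_term \<theta> (Var x) = subst_term \<theta> t"
      using \<sigma>t th_eq[of t] th_eq[of "Var x"] by (simp add: \<sigma>_def)
    moreover have "subst_term \<theta> a = subst_term \<theta> b" if "(a, b) \<in> set E" for a b
      using \<theta>' that unfolding th_eq mguE_def unifE_def E'_def by auto
    ultimately show ?thesis by (auto simp: unifE_def)
  qed
  have gen: "v = \<theta> \<circ>\<^sub>s v" if "unifE v ((Var x, t) # E)" for v
  proof -
    have "v = \<theta>' \<circ>\<^sub>s v" using \<theta>' unifE'[OF that] by (auto simp: mguE_def)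
    then have "\<theta> \<circ>\<^sub>s v = \<sigma> \<circ>\<^sub>s v" by (simp add: \<theta>_def subst_comp_assoc)
    then show ?thesis using \<sigma>v[OF that] by simp
  qed
  have vars: "subst_vars \<theta> \<subseteq> varsE ((Var x, t) # E)"
  proof (rule subst_vars_subI)
    fix y assume ny: "\<theta> y \<noteq> Var y"
    have sv: "subst_vars \<theta>' \<subseteq> varsE ((Var x, t) # E)"
      using \<theta>' vars' by (auto simp: mguE_def)
    show "y \<in> varsE ((Var x, t) # E) \<and> vars_term (\<theta> y) \<subseteq> varsE ((Var x, t) # E)"
    proof (cases "y = x")
      case True
      have "\<theta> y = subst_term \<theta>' t" using True by (simp add: \<theta>_def subst_comp_def \<sigma>_def)
      moreover have "vars_term (subst_term \<theta>' t) \<subseteq> varsE ((Var x, t) # E)"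
      proof
        fix z assume "z \<in> vars_term (subst_term \<theta>' t)"
        then obtain w where w: "w \<in> vars_term t" "z \<in> vars_term (\<theta>' w)" by (auto simp: vars_term_subst)
        show "z \<in> varsE ((Var x, t) # E)"
        proof (cases "\<theta>' w = Var w")
          case True then show ?thesis using w by (auto simp: varsE_def)
        next
          case False then show ?thesis using subst_vars_subD[OF sv False] w by auto
        qed
      qed
      ultimately show ?thesis using True by (auto simp: varsE_def)
    next
      case False
      then have "\<theta> y = \<theta>' y" by (simp add: \<theta>_def subst_comp_def \<sigma>_def)
      then show ?thesis using subst_vars_subD[OF sv] ny by auto
    qed
  qed
  show ?thesis using unif gen vars by (auto simp: mguE_def)
qed

lemma unify_main:
  fixes E :: "(('f, 'v) fterm \<times> ('f, 'v) fterm) list"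
  shows "unifE u E \<Longrightarrow> \<exists>\<theta>. mguE \<theta> E"
proof (induction E arbitrary: u rule: wf_induct[OF wf_inv_image[OF wf_lex_prod[OF wf_less_than wf_less_than]], of "\<lambda>E. (card (varsE E), szE E)"])
  case (1 E)
  have IH: "\<exists>\<theta>. mguE \<theta> E'" if "card (varsE E') < card (varsE E) \<or> (card (varsE E') = card (varsE E) \<and> szE E' < szE E)"
    "unifE u' E'" for E' :: "(('f, 'v) fterm \<times> ('f, 'v) fterm) list" and u'
  proof -
    have "(E', E) \<in> inv_image (less_than <*lex*> less_than) (\<lambda>E. (card (varsE E), szE E))"
      using that(1) by auto
    then show ?thesis using 1(1) that(2) by blast
  qed
  show ?case
  proof (cases E)
    case Nil
    then show ?thesis
      by (intro exI[of _ Var]) (auto simp: mguE_def unifE_def subst_vars_def subst_domain_def subst_range_vars_def)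
  next
    case (Cons p E0)
    obtain s t where p: "p = (s, t)" by (cases p)
    have E: "E = (s, t) # E0" using Cons p by simp
    have u: "subst_term u s = subst_term u t" "unifE u E0" using 1(2) E by (auto simp: unifE_def)
    show ?thesis
    proof (cases "s = t")
      case True
      have "card (varsE E0) \<le> card (varsE E)" by (rule card_mono) (auto simp: E varsE_def)
      moreover have "szE E0 < szE E" using tsize_pos[of s] by (simp add: E szE_def)
      ultimately obtain \<theta> where "mguE \<theta> E0" using IH[OF _ u(2)] by fastforce
      then show ?thesis
        by (intro exI[of _ \<theta>]) (auto simp: E True mguE_def unifE_def varsE_def)
    next
      case st: False
      have var_case: "\<exists>\<theta>. mguE \<theta> ((Var x, r) # E0)"
        if "varsE ((Var x, r) # E0) = varsE E" "unifE u ((Var x, r) # E0)" "r \<noteq> Var x" for x r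
      proof (cases "x \<in> vars_term r")
        case True
        have "tsize (u x) < tsize (subst_term u r)" by (rule occurs_lt[OF True that(3)])
        moreover have "u x = subst_term u r" using that(2) by (auto simp: unifE_def)
        ultimately show ?thesis by simp
      next
        case False
        show ?thesis
          by (rule var_elim[OF False that(2)]) (use IH that(1) in auto)
      qed
      show ?thesis
      proof (cases s)
        case (Var x)
        then show ?thesis using var_case[of x t] u st E by (auto simp: varsE_def unifE_def)
      next
        case (Fun f ss)
        note sF = Fun
        show ?thesis
        proof (cases t)
          case (Var x)
          have "\<exists>\<theta>. mguE \<theta> ((Var x, s) # E0)"
            using var_case[of x s] u st E Var by (auto simp: varsE_def unifE_def)
          then obtain \<theta> where "mguE \<theta> ((Var x, s) # E0)" by blast
          show ?thesis
          proof (rule exI[of _ \<theta>], rule mguE_transfer[of "(Var x, s) # E0"])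
            show "unifE \<sigma> ((Var x, s) # E0) \<longleftrightarrow> unifE \<sigma> E" for \<sigma>
              unfolding E Var unifE_def by (simp, metis)
            show "varsE ((Var x, s) # E0) \<subseteq> varsE E" unfolding E Var varsE_def by auto
          qed fact
        next
          case (Fun g ts)
          have fg: "f = g" and len: "length ss = length ts" and uz: "unifE u (zip ss ts)"
            using u(1) sF Fun map_eq_zip[of "subst_term u" ss ts] by (auto simp: unifE_def)
          define E' where "E' = zip ss ts @ E0"
          have uE': "\<And>\<sigma>. unifE \<sigma> E' \<longleftrightarrow> unifE \<sigma> E"
          proof -
            fix \<sigma>
            have "map (subst_term \<sigma>) ss = map (subst_term \<sigma>) ts \<longleftrightarrow> unifE \<sigma> (zip ss ts)"
              using map_eq_zip[of "subst_term \<sigma>" ss ts] len by (simp add: unifE_def)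
            then show "unifE \<sigma> E' \<longleftrightarrow> unifE \<sigma> E"
              unfolding E'_def E sF Fun fg unifE_def by auto
          qed
          have vE': "varsE E' = varsE E"
            using varsE_zip[OF len] by (auto simp: E'_def E sF Fun varsE_def)
          have sE': "szE E' < szE E"
            using szE_zip[OF len] by (simp add: E'_def E sF Fun szE_def)
          obtain \<theta> where "mguE \<theta> E'" using IH[of E' u] uE' vE' sE' 1(2) by auto
          then show ?thesis using mguE_transfer[of E' E] uE' vE' by auto
        qed
      qed
    qed
  qed
qed

lemma atom_mgu_exists:
  assumes "subst_atom u a = subst_atom u b"
  shows "\<exists>\<theta>. idem_rel_mgu \<theta> a b"
proof -
  obtain P ss where a: "a = Atom P ss" by (cases a)
  obtain Q ts where b: "b = Atom Q ts" by (cases b)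
  have PQ: "P = Q" and len: "length ss = length ts" and uz: "unifE u (zip ss ts)"
    using assms map_eq_zip[of "subst_term u" ss ts] by (auto simp: a b unifE_def)
  obtain \<theta> where th: "mguE \<theta> (zip ss ts)" using unify_main[OF uz] by blast
  have uni: "unifier \<sigma> a b \<longleftrightarrow> unifE \<sigma> (zip ss ts)" for \<sigma>
    using map_eq_zip[of "subst_term \<sigma>" ss ts] len by (auto simp: a b PQ unifier_def unifE_def)
  have "unifier \<theta> a b" using th uni by (auto simp: mguE_def)
  moreover have "\<forall>\<sigma>. unifier \<sigma> a b \<longrightarrow> (\<exists>\<delta>. \<sigma> = \<theta> \<circ>\<^sub>s \<delta>)"
    using th uni by (auto simp: mguE_def)
  moreover have "\<theta> \<circ>\<^sub>s \<theta> = \<theta>" using th by (auto simp: mguE_def)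
  moreover have "subst_vars \<theta> \<subseteq> vars_atom a \<union> vars_atom b"
    using th varsE_zip[OF len] by (auto simp: mguE_def a b)
  ultimately show ?thesis by (auto simp: idem_rel_mgu_def mgu_def)
qed



lemma subst_pgoal_comp: "subst_pgoal \<tau> (subst_pgoal \<sigma> G) = subst_pgoal (\<sigma> \<circ>\<^sub>s \<tau>) G"
  unfolding subst_pgoal_def image_image by (simp add: case_prod_beta subst_atom_comp)

lemma shift_subst_commute: "shift_pgoal \<pi> (subst_pgoal \<sigma> G) = subst_pgoal \<sigma> (shift_pgoal \<pi> G)"
  unfolding subst_pgoal_def shift_pgoal_def image_image by (simp add: case_prod_beta)

lemma shift_shift: "shift_pgoal \<rho> (shift_pgoal \<pi> G) = shift_pgoal (\<rho> \<circ> \<pi>) G"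
  unfolding shift_pgoal_def image_image by (simp add: case_prod_beta)

lemma subst_pgoal_Var[simp]: "subst_pgoal Var G = G"
  unfolding subst_pgoal_def by (simp add: case_prod_beta)

lemma shift_pgoal_id[simp]: "shift_pgoal id G = G" "shift_pgoal (\<lambda>x. x) G = G"
  unfolding shift_pgoal_def by (simp_all add: case_prod_beta)

lemma subst_pgoal_Un[simp]: "subst_pgoal \<sigma> (A \<union> B) = subst_pgoal \<sigma> A \<union> subst_pgoal \<sigma> B"
  unfolding subst_pgoal_def by auto

lemma shift_pgoal_Un[simp]: "shift_pgoal \<sigma> (A \<union> B) = shift_pgoal \<sigma> A \<union> shift_pgoal \<sigma> B"
  unfolding shift_pgoal_def by auto

lemma subst_pgoal_insert[simp]: "subst_pgoal \<sigma> (insert x A) = insert (subst_patom \<sigma> x) (subst_pgoal \<sigma> A)"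
  unfolding subst_pgoal_def subst_patom_def by (auto simp: case_prod_beta)

lemma shift_pgoal_insert[simp]: "shift_pgoal \<sigma> (insert x A) = insert (shift_patom \<sigma> x) (shift_pgoal \<sigma> A)"
  unfolding shift_pgoal_def shift_patom_def by (auto simp: case_prod_beta)

lemma subst_pgoal_empty[simp]: "subst_pgoal \<sigma> {} = {}" and shift_pgoal_empty[simp]: "shift_pgoal \<pi> {} = {}"
  by (auto simp: subst_pgoal_def shift_pgoal_def)

lemma prios_shift: "prios (shift_pgoal \<pi> G) = \<pi> ` prios G"
  unfolding prios_def shift_pgoal_def image_image by (simp add: case_prod_beta)

lemma prios_subst: "prios (subst_pgoal \<sigma> G) = prios G"
  unfolding prios_def subst_pgoal_def image_image by (simp add: case_prod_beta)

lemma vars_pgoal_subst: "vars_pgoal (subst_pgoal \<sigma> G) = (\<Union>x\<in>G. vars_atom (subst_atom \<sigma> (fst x)))"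
  unfolding vars_pgoal_def subst_pgoal_def by (auto simp: case_prod_beta)

lemma vars_pgoal_shift[simp]: "vars_pgoal (shift_pgoal \<pi> G) = vars_pgoal G"
  unfolding vars_pgoal_def shift_pgoal_def by (auto simp: case_prod_beta)

lemma vars_pgoal_Un[simp]: "vars_pgoal (A \<union> B) = vars_pgoal A \<union> vars_pgoal B"
  unfolding vars_pgoal_def by auto

lemma vars_pgoal_insert[simp]: "vars_pgoal (insert x B) = vars_atom (fst x) \<union> vars_pgoal B"
  unfolding vars_pgoal_def by auto

lemma finite_vars_pgoal: "finite G \<Longrightarrow> finite (vars_pgoal G)"
  unfolding vars_pgoal_def by auto

lemma is_pgoal_subst: "is_pgoal G \<Longrightarrow> is_pgoal (subst_pgoal \<sigma> G)"
  unfolding is_pgoal_def subst_pgoal_def by (auto simp: case_prod_beta)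

lemma is_pgoal_shift: "inj \<pi> \<Longrightarrow> is_pgoal G \<Longrightarrow> is_pgoal (shift_pgoal \<pi> G)"
  unfolding is_pgoal_def shift_pgoal_def by (auto simp: case_prod_beta inj_eq)

lemma subst_pgoal_cong: "(\<And>x. x \<in> G \<Longrightarrow> subst_atom \<sigma> (fst x) = subst_atom \<tau> (fst x)) \<Longrightarrow>
  subst_pgoal \<sigma> G = subst_pgoal \<tau> G"
  unfolding subst_pgoal_def by (auto simp: case_prod_beta intro!: image_cong)

lemma shift_pgoal_cong: "(\<And>p. p \<in> prios G \<Longrightarrow> f p = g p) \<Longrightarrow> shift_pgoal f G = shift_pgoal g G"
  unfolding shift_pgoal_def prios_def by (auto simp: case_prod_beta intro!: image_cong)

lemma strict_mono_unique:
  fixes f g :: "rat \<Rightarrow> rat"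
  assumes "strict_mono f" "strict_mono g" "finite A" "f ` A = g ` A"
  shows "x \<in> A \<Longrightarrow> f x = g x"
  using assms(3,4)
proof (induction "card A" arbitrary: A)
  case 0
  then show ?case by auto
next
  case (Suc n)
  define m where "m = Max A"
  have ne: "A \<noteq> {}" using Suc by auto
  have fm: "f m = Max (f ` A)" unfolding m_def
    by (rule mono_Max_commute) (use assms(1) Suc ne in \<open>auto intro: strict_mono_mono\<close>)
  have gm: "g m = Max (g ` A)" unfolding m_def
    by (rule mono_Max_commute) (use assms(2) Suc ne in \<open>auto intro: strict_mono_mono\<close>)
  have eqm: "f m = g m" using fm gm Suc by simp
  have mA: "m \<in> A" using Suc ne by (simp add: m_def)
  show ?case
  proof (cases "x = m")
    case True then show ?thesis using eqm by simp
  next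
    case False
    have injf: "inj f" and injg: "inj g" using assms(1,2) strict_mono_imp_inj_on by auto
    have "f ` (A - {m}) = f ` A - {f m}" using injf by (simp add: image_set_diff)
    moreover have "g ` (A - {m}) = g ` A - {g m}" using injg by (simp add: image_set_diff)
    ultimately have "f ` (A - {m}) = g ` (A - {m})" using eqm Suc by simp
    moreover have "n = card (A - {m})" using Suc mA by simp
    ultimately show ?thesis using Suc False by auto
  qed
qed

lemma shifting_comp: "shifting \<rho> \<Longrightarrow> shifting \<pi> \<Longrightarrow> shifting (\<rho> \<circ> \<pi>)"
  unfolding shifting_def by (auto intro: bij_comp simp: strict_mono_def)

lemma shifting_id: "shifting id" "shifting (\<lambda>x. x)"
  unfolding shifting_def strict_mono_def by (simp_all add: bij_def inj_on_def surj_def)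

lemma shifting_inj: "shifting \<pi> \<Longrightarrow> inj \<pi>"
  unfolding shifting_def by (auto intro: strict_mono_imp_inj_on)

lemma vars_term_ren: "vars_term (subst_term (\<lambda>x. Var (f x)) t) = f ` vars_term t"
  by (induction t) auto

lemma vars_atom_ren: "vars_atom (subst_atom (\<lambda>x. Var (f x)) a) = f ` vars_atom a"
  by (cases a) (auto simp: vars_term_ren)

lemma vars_pgoal_ren: "vars_pgoal (subst_pgoal (\<lambda>x. Var (f x)) B) = f ` vars_pgoal B"
  unfolding vars_pgoal_subst by (auto simp: vars_atom_ren vars_pgoal_def)

lemma vars_clause_ren: "vars_clause (subst_clause (\<lambda>x. Var (f x)) c) = f ` vars_clause c"
  unfolding vars_clause_def subst_clause_def by (simp add: vars_pgoal_ren vars_atom_ren image_Un)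

lemma finite_vars_clause: "is_clause c \<Longrightarrow> finite (vars_clause c)"
  unfolding is_clause_def is_pgoal_def vars_clause_def by (auto intro: finite_vars_pgoal)

lemma fresh_bij:
  assumes inf: "infinite (UNIV :: 'v set)" and fA: "finite (A :: 'v set)" and fW: "finite (W :: 'v set)"
  shows "\<exists>f. bij f \<and> f ` A \<inter> W = {}"
proof -
  have "infinite (UNIV - (A \<union> W))" using inf fA fW by simp
  then obtain B where B: "B \<subseteq> UNIV - (A \<union> W)" "finite B" "card B = card A"
    using infinite_arbitrarily_large[of "UNIV - (A \<union> W)" "card A"] by metis
  obtain g where g: "bij_betw g A B" using finite_same_card_bij[OF fA B(2)] B(3) by auto
  define f where "f x = (if x \<in> A then g x else if x \<in> B then inv_into A g x else x)" for x
  have AB: "A \<inter> B = {}" using B by auto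
  have gA: "g ` A = B" using g by (simp add: bij_betw_def)
  have invA: "x \<in> B \<Longrightarrow> inv_into A g x \<in> A" for x using gA by (auto intro: inv_into_into)
  have ff: "f (f x) = x" for x
  proof -
    consider "x \<in> A" | "x \<in> B" | "x \<notin> A" "x \<notin> B" by blast
    then show ?thesis
    proof cases
      case 1
      then have "g x \<in> B" "g x \<notin> A" using gA AB by auto
      then show ?thesis using 1 g by (simp add: f_def bij_betw_def)
    next
      case 2
      then have "inv_into A g x \<in> A" using invA by auto
      then show ?thesis using 2 AB gA by (auto simp: f_def f_inv_into_f)
    qed (simp add: f_def)
  qed
  have "bij f" by (rule o_bij[of f f]) (auto simp: ff fun_eq_iff)
  moreover have "f ` A = B" using gA by (auto simp: f_def)
  ultimately show ?thesis using B by auto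
qed



fun chain :: "('p, 'f, 'v) pgoal \<Rightarrow> ('p, 'f, 'v) pstep list \<Rightarrow> bool" where
  "chain G [] = True"
| "chain G (s # ds) = (valid_step s \<and> st_source s = G \<and> chain (st_target s) ds)"

definition rv :: "('p, 'f, 'v) pstep \<Rightarrow> 'v set" where
  "rv s = vars_clause (subst_clause (st_ren s) (st_clause s))"

fun freshr :: "'v set \<Rightarrow> ('p, 'f, 'v) pstep list \<Rightarrow> bool" where
  "freshr W [] = True"
| "freshr W (s # ds) = (rv s \<inter> W = {} \<and> freshr (W \<union> rv s) ds)"

lemma chain_of_idx:
  "(\<forall>i<length ds. valid_step (ds ! i)) \<Longrightarrow> (ds \<noteq> [] \<longrightarrow> st_source (ds ! 0) = G)
   \<Longrightarrow> (\<forall>i. Suc i < length ds \<longrightarrow> st_source (ds ! Suc i) = st_target (ds ! i)) \<Longrightarrow> chain G ds"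
proof (induction ds arbitrary: G)
  case Nil
  then show ?case by simp
next
  case (Cons s ds)
  have "chain (st_target s) ds"
  proof (rule Cons.IH)
    show "\<forall>i<length ds. valid_step (ds ! i)" using Cons.prems(1) by auto
    show "ds \<noteq> [] \<longrightarrow> st_source (ds ! 0) = st_target s" using Cons.prems(3) by force
    show "\<forall>i. Suc i < length ds \<longrightarrow> st_source (ds ! Suc i) = st_target (ds ! i)"
      using Cons.prems(3) by force
  qed
  then show ?case using Cons.prems(1,2) by force
qed

lemma idx_of_chain:
  "chain G ds \<Longrightarrow> (\<forall>i<length ds. valid_step (ds ! i)) \<and> (ds \<noteq> [] \<longrightarrow> st_source (ds ! 0) = G)
   \<and> (\<forall>i. Suc i < length ds \<longrightarrow> st_source (ds ! Suc i) = st_target (ds ! i))"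
proof (induction ds arbitrary: G)
  case Nil
  then show ?case by simp
next
  case (Cons s ds)
  then show ?case by (auto simp: nth_Cons split: nat.split)
qed

lemma idx_of_freshr:
  "freshr W ds \<Longrightarrow> (\<forall>i<length ds. rv (ds ! i) \<inter> W = {})
     \<and> (\<forall>i<length ds. \<forall>j<i. rv (ds ! i) \<inter> rv (ds ! j) = {})"
proof (induction ds arbitrary: W)
  case Nil
  then show ?case by simp
next
  case (Cons s ds)
  have IH: "\<forall>i<length ds. rv (ds ! i) \<inter> (W \<union> rv s) = {}"
    "\<forall>i<length ds. \<forall>j<i. rv (ds ! i) \<inter> rv (ds ! j) = {}"
    using Cons.IH[of "W \<union> rv s"] Cons.prems by auto
  have A: "\<forall>i<length (s # ds). rv ((s # ds) ! i) \<inter> W = {}"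
  proof (intro allI impI)
    fix i assume "i < length (s # ds)"
    then show "rv ((s # ds) ! i) \<inter> W = {}" using IH(1) Cons.prems by (cases i) auto
  qed
  have B: "\<forall>i<length (s # ds). \<forall>j<i. rv ((s # ds) ! i) \<inter> rv ((s # ds) ! j) = {}"
  proof (intro allI impI)
    fix i j assume ij: "i < length (s # ds)" "j < i"
    then obtain i' where i': "i = Suc i'" by (cases i) auto
    show "rv ((s # ds) ! i) \<inter> rv ((s # ds) ! j) = {}"
    proof (cases j)
      case 0
      then show ?thesis using IH(1) i' ij by auto
    next
      case (Suc j')
      then show ?thesis using IH(2) i' ij by auto
    qed
  qed
  show ?case using A B by blast
qed

lemma pderivation_chain: "pderivation G ds \<Longrightarrow> chain G ds"
  unfolding pderivation_def by (rule chain_of_idx) auto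

lemma chain_pderivation:
  assumes "chain G ds" "freshr W ds" "vars_pgoal G \<subseteq> W"
  shows "pderivation G ds"
proof -
  note c = idx_of_chain[OF assms(1)] and f = idx_of_freshr[OF assms(2)]
  show ?thesis unfolding pderivation_def
  proof (intro conjI)
    show "\<forall>i<length ds. vars_clause (subst_clause (st_ren (ds ! i)) (st_clause (ds ! i))) \<inter> vars_pgoal G = {}"
      using f assms(3) unfolding rv_def by blast
    show "\<forall>i<length ds. \<forall>j<i. vars_clause (subst_clause (st_ren (ds ! i)) (st_clause (ds ! i))) \<inter>
        vars_clause (subst_clause (st_ren (ds ! j)) (st_clause (ds ! j))) = {}"
      using f unfolding rv_def by blast
  qed (use c in auto)
qed

lemma valid_unique:
  assumes "valid_step s1" "valid_step s2" "st_source s1 = st_source s2"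
  shows "st_sel s1 = st_sel s2 \<and> st_rest s1 = st_rest s2"
proof -
  have m1: "\<forall>y\<in>st_rest s1. snd (st_sel s1) < snd y" and m2: "\<forall>y\<in>st_rest s2. snd (st_sel s2) < snd y"
    using assms by (auto simp: valid_step_def)
  have n1: "st_sel s1 \<notin> st_rest s1" using m1 by auto
  have n2: "st_sel s2 \<notin> st_rest s2" using m2 by auto
  have eq: "insert (st_sel s1) (st_rest s1) = insert (st_sel s2) (st_rest s2)"
    using assms(3) by (simp add: st_source_def)
  have sel: "st_sel s1 = st_sel s2"
  proof (rule ccontr)
    assume ne: "st_sel s1 \<noteq> st_sel s2"
    have "st_sel s2 \<in> insert (st_sel s1) (st_rest s1)" "st_sel s1 \<in> insert (st_sel s2) (st_rest s2)"
      using eq by (metis insertI1)+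
    then have "st_sel s2 \<in> st_rest s1" "st_sel s1 \<in> st_rest s2" using ne by auto
    then show False using m1 m2 by force
  qed
  have "st_rest s1 = insert (st_sel s1) (st_rest s1) - {st_sel s1}" using n1 by auto
  also have "\<dots> = st_rest s2" using eq sel n2 by auto
  finally show ?thesis using sel by simp
qed

lemma vars_atom_subst_sub: "vars_atom (subst_atom \<theta> b) \<subseteq> vars_atom b \<union> subst_vars \<theta>"
proof
  fix z assume "z \<in> vars_atom (subst_atom \<theta> b)"
  then obtain y where y: "y \<in> vars_atom b" "z \<in> vars_term (\<theta> y)" by (auto simp: vars_atom_subst)
  show "z \<in> vars_atom b \<union> subst_vars \<theta>"
  proof (cases "\<theta> y = Var y")
    case True then show ?thesis using y by auto
  next
    case False then show ?thesis using y
      by (auto simp: subst_vars_def subst_domain_def subst_range_vars_def)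
  qed
qed

lemma shift_patom_id[simp]: "shift_patom id x = x"
  by (simp add: shift_patom_def)

lemma subst_patom_Var[simp]: "subst_patom Var x = x"
  by (simp add: subst_patom_def)

lemma is_pgoal_empty[simp]: "is_pgoal {}"
  by (simp add: is_pgoal_def)

lemma prios_empty[simp]: "prios {} = {}"
  by (simp add: prios_def)



lemma lift:
  fixes S :: "('p, 'f, 'v) pstep set"
  assumes inf: "infinite (UNIV :: 'v set)" and cS: "complete_steps S" and iS: "spec_independent S"
  shows "chain G ds \<Longrightarrow> set ds \<subseteq> S \<Longrightarrow> shifting \<sigma> \<Longrightarrow> finite W
    \<Longrightarrow> vars_pgoal (shift_pgoal \<sigma> (subst_pgoal lm G)) \<subseteq> W
    \<Longrightarrow> (\<forall>x\<in>G. subst_atom (lm \<circ>\<^sub>s \<tau>) (fst x) = subst_atom (composed_mgu ds \<circ>\<^sub>s \<kappa>) (fst x))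
    \<Longrightarrow> \<exists>ds'. chain (shift_pgoal \<sigma> (subst_pgoal lm G)) ds' \<and> set ds' \<subseteq> S
          \<and> map st_clause ds' = map st_clause ds \<and> freshr W ds'"
proof (induction ds arbitrary: G \<sigma> lm \<tau> \<kappa> W)
  case Nil
  then show ?case by (intro exI[of _ "[]"]) simp
next
  case (Cons s ds)
  have vs: "valid_step s" and srcG: "st_source s = G" and ch: "chain (st_target s) ds"
    using Cons.prems(1) by auto
  have sS: "s \<in> S" and dsS: "set ds \<subseteq> S" using Cons.prems(2) by auto
  note sh\<sigma> = Cons.prems(3) and fW = Cons.prems(4) and vW = Cons.prems(5) and inv = Cons.prems(6)
  define a where "a = fst (st_sel s)"
  define R where "R = st_rest s"
  define c where "c = st_clause s"
  define h where "h = fst c"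
  define B where "B = snd c"
  define \<theta>1 where "\<theta>1 = st_mgu s"
  define \<pi>1 where "\<pi>1 = st_shift s"
  define Vc where "Vc = vars_clause c"
  define \<Theta>' where "\<Theta>' = composed_mgu ds"
  define \<gamma> where "\<gamma> = \<theta>1 \<circ>\<^sub>s (\<Theta>' \<circ>\<^sub>s \<kappa>)"
  have G: "G = insert (st_sel s) R" using srcG by (simp add: st_source_def R_def)
  have isG: "is_pgoal G" using vs srcG by (simp add: valid_step_def)
  have fG: "finite G" using isG by (simp add: is_pgoal_def)
  have isc: "is_clause c" using vs by (simp add: valid_step_def c_def)
  have fVc: "finite Vc" using finite_vars_clause[OF isc] by (simp add: Vc_def)
  obtain f1 where f1: "bij f1" and \<xi>1: "st_ren s = (\<lambda>x. Var (f1 x))"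
    using vs by (auto simp: valid_step_def renaming_def)
  define \<xi>1' where "\<xi>1' = st_ren s"
  obtain f2 where f2: "bij f2" and f2W: "f2 ` Vc \<inter> W = {}" using fresh_bij[OF inf fVc fW] by blast
  define \<xi>2 where "\<xi>2 = (\<lambda>x. Var (f2 x) :: ('f, 'v) fterm)"
  have mgu1: "idem_rel_mgu \<theta>1 a (subst_atom (st_ren s) h)"
    using vs by (simp add: valid_step_def \<theta>1_def a_def h_def c_def)
  have unif1: "subst_atom \<theta>1 a = subst_atom \<theta>1 (subst_atom (st_ren s) h)"
    using mgu1 by (simp add: idem_rel_mgu_def mgu_def unifier_def)
  have disj1: "vars_pgoal G \<inter> f1 ` Vc = {}"
    using vs srcG \<xi>1 vars_clause_ren[of f1 c] by (simp add: valid_step_def Vc_def c_def)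
  have hVc: "vars_atom h \<subseteq> Vc" by (simp add: h_def Vc_def vars_clause_def)
  have BVc: "x \<in> B \<Longrightarrow> vars_atom (fst x) \<subseteq> Vc" for x
    by (auto simp: B_def Vc_def vars_clause_def vars_pgoal_def)
  have cm: "composed_mgu (s # ds) = \<theta>1 \<circ>\<^sub>s \<Theta>'"
    by (simp add: composed_mgu_def \<theta>1_def \<Theta>'_def)
  have invG: "subst_atom (lm \<circ>\<^sub>s \<tau>) (fst x) = subst_atom \<gamma> (fst x)" if "x \<in> G" for x
    using inv that by (simp add: cm \<gamma>_def subst_comp_assoc)
  have vGW: "vars_atom (subst_atom lm (fst x)) \<subseteq> W" if "x \<in> G" for x
    using vW that by (auto simp: vars_pgoal_subst)
  define \<tau>s where "\<tau>s v = (if v \<in> f2 ` Vc then subst_term \<gamma> (Var (f1 (inv f2 v))) else \<tau> v)" for v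
  have ta: "subst_atom \<tau>s (subst_atom lm (fst x)) = subst_atom \<gamma> (fst x)" if "x \<in> G" for x
  proof -
    have "subst_atom \<tau>s (subst_atom lm (fst x)) = subst_atom \<tau> (subst_atom lm (fst x))"
      by (rule subst_atom_cong) (use vGW[OF that] f2W in \<open>auto simp: \<tau>s_def\<close>)
    then show ?thesis using invG[OF that] by (simp add: subst_atom_comp)
  qed
  have tren: "subst_atom \<tau>s (subst_atom \<xi>2 b) = subst_atom \<gamma> (subst_atom (st_ren s) b)"
    if "vars_atom b \<subseteq> Vc" for b
  proof -
    have "subst_atom (\<xi>2 \<circ>\<^sub>s \<tau>s) b = subst_atom (st_ren s \<circ>\<^sub>s \<gamma>) b"
    proof (rule subst_atom_cong)
      fix y assume "y \<in> vars_atom b"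
      then have "y \<in> Vc" using that by auto
      then show "(\<xi>2 \<circ>\<^sub>s \<tau>s) y = (st_ren s \<circ>\<^sub>s \<gamma>) y"
        using f2 by (simp add: subst_comp_def \<xi>2_def \<tau>s_def \<xi>1 bij_is_inj)
    qed
    then show ?thesis by (simp add: subst_atom_comp)
  qed
  have aG: "st_sel s \<in> G" using G by simp
  have \<gamma>unif: "subst_atom \<gamma> a = subst_atom \<gamma> (subst_atom (st_ren s) h)"
    using unif1 by (simp add: \<gamma>_def subst_atom_comp[of \<theta>1])
  have tunif: "subst_atom \<tau>s (subst_atom lm a) = subst_atom \<tau>s (subst_atom \<xi>2 h)"
    using ta[OF aG] tren[OF hVc] \<gamma>unif by (simp add: a_def)
  obtain \<theta>2 where mgu2: "idem_rel_mgu \<theta>2 (subst_atom lm a) (subst_atom \<xi>2 h)"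
    using atom_mgu_exists[OF tunif] by blast
  have unif2: "subst_atom \<theta>2 (subst_atom lm a) = subst_atom \<theta>2 (subst_atom \<xi>2 h)"
    using mgu2 by (simp add: idem_rel_mgu_def mgu_def unifier_def)
  define sel2 where "sel2 = shift_patom \<sigma> (subst_patom lm (st_sel s))"
  define rest2 where "rest2 = shift_pgoal \<sigma> (subst_pgoal lm R)"
  define G' where "G' = shift_pgoal \<sigma> (subst_pgoal lm G)"
  have G': "G' = insert sel2 rest2" by (simp add: G'_def G sel2_def rest2_def)
  have fst_sel2: "fst sel2 = subst_atom lm a"
    by (simp add: sel2_def shift_patom_def subst_patom_def a_def)
  define snew :: "('p, 'f, 'v) pstep" where
    "snew = \<lparr>st_sel = sel2, st_rest = rest2, st_clause = c, st_ren = \<xi>2, st_mgu = \<theta>2, st_shift = \<sigma> \<circ> \<pi>1\<rparr>"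
  have inj\<sigma>: "inj \<sigma>" using sh\<sigma> by (rule shifting_inj)
  have sm\<sigma>: "strict_mono \<sigma>" using sh\<sigma> by (simp add: shifting_def)
  have isG': "is_pgoal G'" unfolding G'_def by (rule is_pgoal_shift[OF inj\<sigma> is_pgoal_subst[OF isG]])
  have less2: "\<forall>y\<in>rest2. snd sel2 < snd y"
  proof
    fix y assume "y \<in> rest2"
    then obtain y0 where y0: "y0 \<in> R" "y = (subst_atom lm (fst y0), \<sigma> (snd y0))"
      by (auto simp: rest2_def shift_pgoal_def subst_pgoal_def)
    have "snd (st_sel s) < snd y0" using vs y0 by (auto simp: valid_step_def R_def)
    then show "snd sel2 < snd y" using y0 sm\<sigma>
      by (simp add: sel2_def shift_patom_def subst_patom_def strict_mono_less)
  qed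
  have vG'W: "vars_pgoal G' \<subseteq> W" using vW by (simp add: G'_def)
  have rv2: "vars_clause (subst_clause \<xi>2 c) = f2 ` Vc" by (simp add: \<xi>2_def vars_clause_ren Vc_def)
  have priosB: "prios (shift_pgoal \<pi> (subst_pgoal \<xi> B)) = \<pi> ` prios B" for \<pi> \<xi>
    by (simp add: prios_shift prios_subst)
  have pR2: "prios rest2 = \<sigma> ` prios R" by (simp add: rest2_def prios_shift prios_subst)
  have disjP1: "prios R \<inter> \<pi>1 ` prios B = {}"
    using vs priosB[of \<pi>1 "st_ren s"] by (simp add: valid_step_def R_def \<pi>1_def B_def c_def)
  have valid_new: "valid_step snew"
    unfolding valid_step_def
  proof (intro conjI)
    show "is_pgoal (st_source snew)" using isG' G' by (simp add: snew_def st_source_def)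
    show "\<forall>y\<in>st_rest snew. snd (st_sel snew) < snd y" using less2 by (simp add: snew_def)
    show "is_clause (st_clause snew)" using isc by (simp add: snew_def)
    show "renaming (st_ren snew)" using f2 by (auto simp: snew_def renaming_def \<xi>2_def)
    show "vars_pgoal (st_source snew) \<inter> vars_clause (subst_clause (st_ren snew) (st_clause snew)) = {}"
      using vG'W f2W rv2 G' by (auto simp: snew_def st_source_def)
    show "idem_rel_mgu (st_mgu snew) (fst (st_sel snew)) (subst_atom (st_ren snew) (fst (st_clause snew)))"
      using mgu2 fst_sel2 by (simp add: snew_def h_def)
    show "shifting (st_shift snew)" using shifting_comp[OF sh\<sigma>] vs by (simp add: snew_def valid_step_def \<pi>1_def)
    show "prios (st_rest snew) \<inter> prios (shift_pgoal (st_shift snew) (subst_pgoal (st_ren snew) (snd (st_clause snew)))) = {}"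
    proof -
      have "prios (shift_pgoal (st_shift snew) (subst_pgoal (st_ren snew) (snd (st_clause snew))))
          = \<sigma> ` (\<pi>1 ` prios B)"
        using priosB[of "\<sigma> \<circ> \<pi>1" \<xi>2] by (simp add: snew_def B_def image_comp)
      then show ?thesis using pR2 disjP1 inj\<sigma> by (auto simp: snew_def inj_eq)
    qed
  qed
  obtain s' where s'S: "s' \<in> S" and s'src: "st_source s' = st_source snew" and s'c: "st_clause s' = c"
    using cS valid_new by (auto simp: complete_steps_def snew_def)
  have vs': "valid_step s'" using cS s'S by (auto simp: complete_steps_def)
  have s'sr: "st_sel s' = sel2" "st_rest s' = rest2"
    using valid_unique[OF vs' valid_new s'src] by (simp_all add: snew_def)
  define \<pi>' where "\<pi>' = st_shift s'"
  define s2 where "s2 = snew\<lparr>st_shift := \<pi>'\<rparr>"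
  have s2f: "st_sel s2 = sel2" "st_rest s2 = rest2" "st_clause s2 = c" "st_ren s2 = \<xi>2"
    "st_mgu s2 = \<theta>2" "st_shift s2 = \<pi>'"
    by (simp_all add: s2_def snew_def)
  have valid2: "valid_step s2"
    unfolding valid_step_def
  proof (intro conjI)
    show "shifting (st_shift s2)" using vs' by (simp add: s2f valid_step_def \<pi>'_def)
    show "prios (st_rest s2) \<inter> prios (shift_pgoal (st_shift s2) (subst_pgoal (st_ren s2) (snd (st_clause s2)))) = {}"
      using vs' priosB[of \<pi>' "st_ren s'"] priosB[of \<pi>' \<xi>2] s'sr s'c
      by (simp add: s2f valid_step_def \<pi>'_def B_def)
  qed (use valid_new in \<open>simp_all add: s2_def snew_def valid_step_def st_source_def\<close>)
  have mcl: "mutual_congruent_lowerings s2 s'"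
    unfolding mutual_congruent_lowerings_def congruent_lowering_def
  proof (intro conjI exI)
    show "lowering_with Var id {} s2 s'"
      using vs' valid2 s'sr s'c s2f shifting_id by (simp add: lowering_with_def)
    show "lowering_with Var id {} s' s2"
      using vs' valid2 s'sr s'c s2f shifting_id by (simp add: lowering_with_def)
  qed (use shifting_id s2f s'c \<pi>'_def in auto)
  have s2S: "s2 \<in> S" using cS s'S mcl by (auto simp: complete_steps_def)
  have low: "lowering {} s2 s"
    unfolding lowering_def
  proof (intro exI)
    show "lowering_with lm \<sigma> {} s2 s"
      using vs valid2 sh\<sigma> s2f by (simp add: lowering_with_def sel2_def rest2_def R_def c_def)
  qed
  obtain lam' sig' \<rho> where lw: "lowering_with lam' sig' {} s2 s" and sh\<rho>: "shifting \<rho>"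
    and \<rho>R: "shift_pgoal \<rho> R = shift_pgoal sig' R"
    and \<rho>B: "shift_pgoal \<rho> (shift_pgoal \<pi>1 B) = shift_pgoal \<pi>' B"
  proof -
    have "congruent_lowering {} s2 s" using iS sS s2S low unfolding spec_independent_def by blast
    then obtain lam' sig' \<rho> where "lowering_with lam' sig' {} s2 s" "shifting \<rho>"
      "shift_pgoal \<rho> (st_rest s) = shift_pgoal sig' (st_rest s)"
      "shift_pgoal \<rho> (shift_pgoal (st_shift s) (snd (st_clause s))) = shift_pgoal (st_shift s2) (snd (st_clause s))"
      unfolding congruent_lowering_def by blast
    then show ?thesis using that by (simp add: R_def \<pi>1_def B_def c_def s2f)
  qed
  have sig'R: "rest2 = shift_pgoal sig' (subst_pgoal lam' R)"
    using lw by (simp add: lowering_with_def s2f R_def)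
  have fR: "finite (prios R)" using fG G by (simp add: prios_def)
  have \<rho>\<sigma>: "\<rho> p = \<sigma> p" if "p \<in> prios R" for p
  proof -
    have "\<rho> ` prios R = sig' ` prios R" using arg_cong[OF \<rho>R, of prios] by (simp add: prios_shift)
    also have "\<dots> = \<sigma> ` prios R" using arg_cong[OF sig'R, of prios] pR2 by (simp add: prios_shift prios_subst)
    finally show ?thesis
      using strict_mono_unique[of \<rho> \<sigma> "prios R"] sh\<rho> sh\<sigma> fR that by (auto simp: shifting_def)
  qed
  have \<rho>rest: "shift_pgoal \<rho> (subst_pgoal lm R) = rest2"
    unfolding rest2_def by (rule shift_pgoal_cong) (use \<rho>\<sigma> in \<open>simp add: prios_subst\<close>)
  define \<mu> where "\<mu> v = (if v \<in> f1 ` Vc then Var (f2 (inv f1 v)) else lm v)" for v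
  have \<mu>G: "subst_atom \<mu> (fst x) = subst_atom lm (fst x)" if "x \<in> G" for x
    by (rule subst_atom_cong) (use disj1 that in \<open>auto simp: \<mu>_def vars_pgoal_def\<close>)
  have \<mu>B: "subst_atom \<mu> (subst_atom (st_ren s) b) = subst_atom \<xi>2 b" if "vars_atom b \<subseteq> Vc" for b
  proof -
    have "subst_atom (st_ren s \<circ>\<^sub>s \<mu>) b = subst_atom \<xi>2 b"
    proof (rule subst_atom_cong)
      fix y assume "y \<in> vars_atom b"
      then have "y \<in> Vc" using that by auto
      then show "(st_ren s \<circ>\<^sub>s \<mu>) y = \<xi>2 y"
        using f1 by (simp add: subst_comp_def \<xi>2_def \<mu>_def \<xi>1 bij_is_inj)
    qed
    then show ?thesis by (simp add: subst_atom_comp)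
  qed
  have unif\<mu>: "unifier (\<mu> \<circ>\<^sub>s \<theta>2) a (subst_atom (st_ren s) h)"
    using unif2 \<mu>G[OF aG] \<mu>B[OF hVc] by (simp add: unifier_def subst_atom_comp a_def)
  obtain \<delta> where \<delta>: "\<mu> \<circ>\<^sub>s \<theta>2 = \<theta>1 \<circ>\<^sub>s \<delta>"
    using mgu1 unif\<mu> by (auto simp: idem_rel_mgu_def mgu_def)
  have unif\<tau>s: "unifier \<tau>s (subst_atom lm a) (subst_atom \<xi>2 h)"
    using tunif by (simp add: unifier_def)
  obtain \<epsilon> where \<epsilon>: "\<tau>s = \<theta>2 \<circ>\<^sub>s \<epsilon>"
    using mgu2 unif\<tau>s by (auto simp: idem_rel_mgu_def mgu_def)
  define X where "X = R \<union> shift_pgoal \<pi>1 (subst_pgoal (st_ren s) B)"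
  have tgt: "st_target s = subst_pgoal \<theta>1 X"
    by (simp add: st_target_def X_def R_def \<theta>1_def \<pi>1_def B_def c_def)
  have \<mu>R: "subst_pgoal \<mu> R = subst_pgoal lm R"
    by (rule subst_pgoal_cong) (use \<mu>G G in auto)
  have \<mu>B': "subst_pgoal \<mu> (subst_pgoal (st_ren s) B) = subst_pgoal \<xi>2 B"
    unfolding subst_pgoal_comp by (rule subst_pgoal_cong) (metis \<mu>B BVc subst_atom_comp)
  have \<mu>X: "subst_pgoal \<mu> X = subst_pgoal lm R \<union> shift_pgoal \<pi>1 (subst_pgoal \<xi>2 B)"
    by (simp add: X_def \<mu>R shift_subst_commute[symmetric] \<mu>B')
  have tgt2: "st_target s2 = shift_pgoal \<rho> (subst_pgoal \<delta> (st_target s))"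
  proof -
    have "shift_pgoal \<rho> (subst_pgoal \<delta> (st_target s)) = shift_pgoal \<rho> (subst_pgoal (\<mu> \<circ>\<^sub>s \<theta>2) X)"
      by (simp add: tgt subst_pgoal_comp \<delta>)
    also have "\<dots> = subst_pgoal \<theta>2 (shift_pgoal \<rho> (subst_pgoal \<mu> X))"
      by (simp add: subst_pgoal_comp[symmetric] shift_subst_commute)
    also have "\<dots> = subst_pgoal \<theta>2 (rest2 \<union> shift_pgoal \<rho> (shift_pgoal \<pi>1 (subst_pgoal \<xi>2 B)))"
      by (simp add: \<mu>X \<rho>rest)
    also have "shift_pgoal \<rho> (shift_pgoal \<pi>1 (subst_pgoal \<xi>2 B)) = shift_pgoal \<pi>' (subst_pgoal \<xi>2 B)"
      by (simp add: shift_subst_commute \<rho>B)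
    finally show ?thesis by (simp add: st_target_def s2f B_def)
  qed
  have vt2: "vars_pgoal (st_target s2) \<subseteq> W \<union> f2 ` Vc"
  proof -
    have Y: "vars_pgoal (rest2 \<union> shift_pgoal \<pi>' (subst_pgoal \<xi>2 B)) \<subseteq> W \<union> f2 ` Vc"
    proof -
      have "vars_pgoal rest2 \<subseteq> W" using vG'W G' by auto
      moreover have "vars_pgoal (subst_pgoal \<xi>2 B) \<subseteq> f2 ` Vc"
        using vars_pgoal_ren[of f2 B] by (auto simp: \<xi>2_def Vc_def B_def vars_clause_def)
      ultimately show ?thesis by auto
    qed
    have sv2: "subst_vars \<theta>2 \<subseteq> W \<union> f2 ` Vc"
    proof -
      have "vars_atom (subst_atom lm a) \<subseteq> W" using vGW[OF aG] by (simp add: a_def)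
      moreover have "vars_atom (subst_atom \<xi>2 h) \<subseteq> f2 ` Vc" using hVc by (auto simp: \<xi>2_def vars_atom_ren)
      ultimately show ?thesis using mgu2 by (auto simp: idem_rel_mgu_def)
    qed
    show ?thesis
    proof
      fix z assume "z \<in> vars_pgoal (st_target s2)"
      then obtain x where x: "x \<in> rest2 \<union> shift_pgoal \<pi>' (subst_pgoal \<xi>2 B)" "z \<in> vars_atom (subst_atom \<theta>2 (fst x))"
        by (auto simp: st_target_def s2f B_def vars_pgoal_subst)
      have "z \<in> vars_atom (fst x) \<union> subst_vars \<theta>2" using vars_atom_subst_sub[of \<theta>2 "fst x"] x(2) by (rule subsetD)
      moreover have "vars_atom (fst x) \<subseteq> W \<union> f2 ` Vc"
        using Y x(1) unfolding vars_pgoal_def by blast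
      ultimately show "z \<in> W \<union> f2 ` Vc" using sv2 by blast
    qed
  qed
  have inv2: "\<forall>x\<in>st_target s. subst_atom (\<delta> \<circ>\<^sub>s \<epsilon>) (fst x) = subst_atom (composed_mgu ds \<circ>\<^sub>s \<kappa>) (fst x)"
  proof
    fix x assume "x \<in> st_target s"
    then obtain x0 where x0: "x0 \<in> X" "fst x = subst_atom \<theta>1 (fst x0)"
      by (auto simp: tgt subst_pgoal_def)
    have key: "subst_atom \<tau>s (subst_atom \<mu> (fst x0)) = subst_atom \<gamma> (fst x0)"
    proof (cases "x0 \<in> R")
      case True
      then have "x0 \<in> G" using G by auto
      then show ?thesis using \<mu>G ta by simp
    next
      case False
      then obtain y where y: "y \<in> B" "fst x0 = subst_atom (st_ren s) (fst y)"
        using x0(1) by (auto simp: X_def shift_pgoal_def subst_pgoal_def)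
      show ?thesis using y \<mu>B[OF BVc[OF y(1)]] tren[OF BVc[OF y(1)]] by simp
    qed
    have "subst_atom (\<delta> \<circ>\<^sub>s \<epsilon>) (fst x) = subst_atom ((\<theta>1 \<circ>\<^sub>s \<delta>) \<circ>\<^sub>s \<epsilon>) (fst x0)"
      by (simp add: x0(2) subst_atom_comp)
    also have "\<dots> = subst_atom \<tau>s (subst_atom \<mu> (fst x0))"
      by (simp add: \<delta>[symmetric] \<epsilon> subst_comp_assoc subst_atom_comp)
    also have "\<dots> = subst_atom \<gamma> (fst x0)" by (rule key)
    also have "\<dots> = subst_atom (composed_mgu ds \<circ>\<^sub>s \<kappa>) (fst x)"
      by (simp add: x0(2) \<gamma>_def subst_atom_comp \<Theta>'_def)
    finally show "subst_atom (\<delta> \<circ>\<^sub>s \<epsilon>) (fst x) = subst_atom (composed_mgu ds \<circ>\<^sub>s \<kappa>) (fst x)" .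
  qed
  obtain ds'' where ds'': "chain (shift_pgoal \<rho> (subst_pgoal \<delta> (st_target s))) ds''" "set ds'' \<subseteq> S"
    "map st_clause ds'' = map st_clause ds" "freshr (W \<union> f2 ` Vc) ds''"
    using Cons.IH[OF ch dsS sh\<rho> _ _ inv2, of "W \<union> f2 ` Vc"] fW fVc vt2 tgt2 by auto
  show ?case
  proof (intro exI[of _ "s2 # ds''"] conjI)
    show "chain (shift_pgoal \<sigma> (subst_pgoal lm G)) (s2 # ds'')"
      using valid2 ds''(1) tgt2 G' by (simp add: st_source_def s2f G'_def)
    show "set (s2 # ds'') \<subseteq> S" using s2S ds'' by auto
    show "map st_clause (s2 # ds'') = map st_clause (s # ds)" using ds'' s2f by (simp add: c_def)
    show "freshr W (s2 # ds'')" using ds''(4) f2W rv2 by (simp add: rv_def s2f Un_commute)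
  qed
qed



theorem lemmaB1:
  fixes S :: "('p, 'f, 'v) pstep set"
    and G :: "('p, 'f, 'v) pgoal"
    and \<phi> :: "('f, 'v) subst"
    and ds :: "('p, 'f, 'v) pstep list"
  assumes "infinite (UNIV :: 'v set)"
    and "spec_indep_scheduling_rule S"
    and "is_pgoal G"
    and "pderivation G ds" and "via S ds"
  shows "\<exists>ds'. pderivation (subst_pgoal \<phi> (subst_pgoal (composed_mgu ds) G)) ds'
               \<and> via S ds' \<and> template ds' = template ds"
proof -
  have cS: "complete_steps S" and iS: "spec_independent S"
    using assms(2) by (auto simp: spec_indep_scheduling_rule_def)
  define G' where "G' = subst_pgoal \<phi> (subst_pgoal (composed_mgu ds) G)"
  have G'eq: "G' = shift_pgoal id (subst_pgoal (composed_mgu ds \<circ>\<^sub>s \<phi>) G)"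
    by (simp add: G'_def subst_pgoal_comp)
  have fG': "finite G'" using is_pgoal_subst[OF is_pgoal_subst[OF assms(3)]]
    by (simp add: G'_def is_pgoal_def)
  have fW: "finite (vars_pgoal G')" by (rule finite_vars_pgoal[OF fG'])
  obtain ds' where ds': "chain G' ds'" "set ds' \<subseteq> S" "map st_clause ds' = map st_clause ds"
    "freshr (vars_pgoal G') ds'"
    using lift[OF assms(1) cS iS pderivation_chain[OF assms(4)], of id "vars_pgoal G'"
        "composed_mgu ds \<circ>\<^sub>s \<phi>" Var \<phi>] assms(5) fW shifting_id G'eq
    by (auto simp: via_def)
  have "pderivation G' ds'" by (rule chain_pderivation[OF ds'(1) ds'(4)]) simp
  then show ?thesis using ds' by (auto simp: G'_def via_def template_def)
qed


end
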